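(* Fix integers $2\le a<b$ with $a\nmid b$, a positive integer $d$, and a positive integer $k$. Assume $f^{(b)}_{b+1},\dots,f^{(b)}_{b+a-1}$ satisfy condition (T) at $\tilde{\mathbf c}\in\mathbb C^{a-1}$. Fix $\mathbf c(-\infty)\in(\mathbb C[[t]])^{a-1}$ with $c_i(-\infty)\equiv t^{di}\tilde c_i\bmod t^{di+1}$, and series $o_{b+j}(\mathbf c)$ ($j=1,\dots,a-1$) of the type described in the context. Suppose the system $\bar f^{(b)}_{b+j}(\mathbf c)=t^{d(b+j)}f^{(b)}_{b+j}(\tilde{\mathbf c})+o_{b+j}(\mathbf c)\pmod{t^{d(b+j)+k}}$, $j=1,\dots,a-1$, has a solution $\mathbf c(k-1)\in(\mathbb C[[t]])^{a-1}$ with $c_i(k-1)\equiv t^{di}\tilde c_i\bmod t^{di+1}$. Then the same system with $k$ replaced by $k+1$ has a solution $\mathbf c(k)$ with $c_i(k)\equiv c_i(k-1)\bmod t^{di+k}$ for all $i$.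
   Context: Polynomials $f^{(b)}_i(\mathbf c)$, $\mathbf c=(c_2,\dots,c_a)$, are defined by $(1+\sum_{k=2}^ac_kx^k)^{b/a}=1+\sum_{i\ge1}f^{(b)}_i(\mathbf c)x^i$. Condition (T) at $\tilde{\mathbf c}$ (for $a>2$): the Jacobian determinant at $\tilde{\mathbf c}$ of $(\bar f^{(b)}_{b+1},\dots,\bar f^{(b)}_{b+a-1})$ with $\bar f$ formed using constants $\tilde{\mathbf c}$ (formula below with $c_k(-\infty)$ replaced by $\tilde c_k$) is nonzero; for $a=2$, (T) holds at any $\tilde c\ne0$. In the system, $\bar f^{(b)}_{b+j}(\mathbf c)=f^{(b)}_{b+j}(\mathbf c)+\sum_{k=2}^{j-1}\frac{(j-k)(c_k-c_k(-\infty))}{a}f^{(b)}_{b+j-k}(\mathbf c(-\infty))-\sum_{k=2}^{j-1}\frac{j-k}{a}\sum_{l=2}^{k-2}\frac{a-l}{a}(c_{k-l}-c_{k-l}(-\infty))c_l(-\infty)f^{(b)}_{b+j-k}(\mathbf c(-\infty))$. Each $o_{b+j}(\mathbf c)\in\mathbb C[c_2,\dots,c_a][[t]]$ is a fixed ($t$-adically convergent) sum of terms of the forms (1) $\alpha t^mc_2^{l_2}\cdots c_a^{l_a}$ with $m+d\sum_pp\,l_p\ge d(b+j)+1$, or (2) $\alpha t^mc_2^{l_2}\cdots c_a^{l_a}(c_k-c_k(-\infty))(c_{k'}-c_{k'}(-\infty))$ with $m+d\sum_pp\,l_p\ge d(b+j)-d(k+k')$, where $\alpha\in\mathbb C$ and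 $m,l_p\ge0$; the unknowns $\mathbf c$ are substituted into these series. *)

theory Defs
  imports Complex_Main "HOL-Analysis.Derivative" "HOL-Computational_Algebra.Formal_Power_Series" "Jordan_Normal_Form.Determinant"
begin

text \<open>Scalars are rationals, embedded into the coefficient ring by sc.
  fcoef sc a b c i = coefficient of x^i in (1 + sum_{k=2..a} c_k x^k)^(b/a),
  computed by the (here finite) binomial series, since the inner sum has order at least 2.
  Only the values c 2, ..., c a are used.\<close>
definition fcoef :: "(rat \<Rightarrow> 'r::comm_ring_1) \<Rightarrow> nat \<Rightarrow> nat \<Rightarrow> (nat \<Rightarrow> 'r) \<Rightarrow> nat \<Rightarrow> 'r" where
  "fcoef sc a b c i =
     fps_nth (\<Sum>n\<le>i. fps_const (sc ((of_nat b / of_nat a) gchoose n))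
                 * (\<Sum>k=2..a. fps_const (c k) * fps_X ^ k) ^ n) i"

text \<open>barf sc a b C c j = bar f^(b)_(b+j)(c), formed with the constants C (= c(-infinity) or tilde c).\<close>
definition barf :: "(rat \<Rightarrow> 'r::comm_ring_1) \<Rightarrow> nat \<Rightarrow> nat \<Rightarrow> (nat \<Rightarrow> 'r) \<Rightarrow> (nat \<Rightarrow> 'r) \<Rightarrow> nat \<Rightarrow> 'r" where
  "barf sc a b C c j =
     fcoef sc a b c (b + j)
     + (\<Sum>k=2..j-1. sc ((of_nat j - of_nat k) / of_nat a) * (c k - C k) * fcoef sc a b C (b + j - k))
     - (\<Sum>k=2..j-1. sc ((of_nat j - of_nat k) / of_nat a)
          * (\<Sum>l=2..k-2. sc ((of_nat a - of_nat l) / of_nat a) * (c (k - l) - C (k - l)) * C l)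
          * fcoef sc a b C (b + j - k))"

definition condT :: "nat \<Rightarrow> nat \<Rightarrow> (nat \<Rightarrow> complex) \<Rightarrow> bool" where
  "condT a b ct =
     (if a = 2 then ct 2 \<noteq> 0
      else det (mat (a - 1) (a - 1)
             (\<lambda>(r, s). deriv (\<lambda>z. barf of_rat a b ct (ct(s + 2 := z)) (r + 1)) (ct (s + 2)))) \<noteq> 0)"

text \<open>t-adic sum  sum_m t^m * g m  in C[[t]].\<close>
definition tadic_sum :: "(nat \<Rightarrow> complex fps) \<Rightarrow> complex fps" where
  "tadic_sum g = Abs_fps (\<lambda>N. \<Sum>m\<le>N. fps_nth (g m) (N - m))"

text \<open>Evaluation of o_(b+j) at c: terms of form (1) with coefficients al1 j m l
  (alpha t^m prod_p c_p^(l p)), and terms of form (2) with coefficients al2 j m l k k'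
  (alpha t^m prod_p c_p^(l p) (c_k - C_k)(c_k' - C_k')), C = c(-infinity).\<close>
definition oval :: "nat \<Rightarrow> (nat \<Rightarrow> complex fps)
    \<Rightarrow> (nat \<Rightarrow> nat \<Rightarrow> (nat \<Rightarrow> nat) \<Rightarrow> complex)
    \<Rightarrow> (nat \<Rightarrow> nat \<Rightarrow> (nat \<Rightarrow> nat) \<Rightarrow> nat \<Rightarrow> nat \<Rightarrow> complex)
    \<Rightarrow> nat \<Rightarrow> (nat \<Rightarrow> complex fps) \<Rightarrow> complex fps" where
  "oval a C al1 al2 j c = tadic_sum (\<lambda>m.
      (\<Sum>l\<in>{l. al1 j m l \<noteq> 0}. fps_const (al1 j m l) * (\<Prod>p=2..a. c p ^ l p))
    + (\<Sum>(l, k, k')\<in>{(l, k, k'). al2 j m l k k' \<noteq> 0}.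
          fps_const (al2 j m l k k') * (\<Prod>p=2..a. c p ^ l p) * (c k - C k) * (c k' - C k')))"

text \<open>Admissibility of the coefficient families (the shape of the o_(b+j) described in the context):
  t-adic convergence (finitely many terms per power of t) and the order constraints.\<close>
definition o_admissible :: "nat \<Rightarrow> nat \<Rightarrow> nat
    \<Rightarrow> (nat \<Rightarrow> nat \<Rightarrow> (nat \<Rightarrow> nat) \<Rightarrow> complex)
    \<Rightarrow> (nat \<Rightarrow> nat \<Rightarrow> (nat \<Rightarrow> nat) \<Rightarrow> nat \<Rightarrow> nat \<Rightarrow> complex) \<Rightarrow> bool" where
  "o_admissible a b d al1 al2 \<longleftrightarrow>
     (\<forall>j m. finite {l. al1 j m l \<noteq> 0}) \<and>
     (\<forall>j m. finite {(l, k, k'). al2 j m l k k' \<noteq> 0}) \<and>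
     (\<forall>j m l. al1 j m l \<noteq> 0 \<longrightarrow>
        m + d * (\<Sum>p=2..a. p * l p) \<ge> d * (b + j) + 1) \<and>
     (\<forall>j m l k k'. al2 j m l k k' \<noteq> 0 \<longrightarrow>
        k \<in> {2..a} \<and> k' \<in> {2..a} \<and>
        int m + int d * (\<Sum>p=2..a. int p * int (l p)) \<ge> int d * int (b + j) - int d * int (k + k'))"

abbreviation fsc :: "rat \<Rightarrow> complex fps" where
  "fsc q \<equiv> fps_const (of_rat q)"

definition solves :: "nat \<Rightarrow> nat \<Rightarrow> nat \<Rightarrow> (nat \<Rightarrow> complex) \<Rightarrow> (nat \<Rightarrow> complex fps)
    \<Rightarrow> (nat \<Rightarrow> nat \<Rightarrow> (nat \<Rightarrow> nat) \<Rightarrow> complex)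
    \<Rightarrow> (nat \<Rightarrow> nat \<Rightarrow> (nat \<Rightarrow> nat) \<Rightarrow> nat \<Rightarrow> nat \<Rightarrow> complex)
    \<Rightarrow> nat \<Rightarrow> (nat \<Rightarrow> complex fps) \<Rightarrow> bool" where
  "solves a b d ct C al1 al2 K c \<longleftrightarrow>
     (\<forall>j\<in>{1..a-1}. fps_X ^ (d * (b + j) + K) dvd
        (barf fsc a b C c j
         - (fps_X ^ (d * (b + j)) * fps_const (fcoef of_rat a b ct (b + j)) + oval a C al1 al2 j c)))"

end

theory Submission
  imports Defs
begin

lemma Xpow_dvd_iff: "(fps_X ^ n dvd (f :: 'a::comm_ring_1 fps)) \<longleftrightarrow> (\<forall>i<n. fps_nth f i = 0)"
proof
  assume "fps_X ^ n dvd f"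
  then obtain g where "f = fps_X ^ n * g" by (auto elim: dvdE)
  then show "\<forall>i<n. fps_nth f i = 0" by (simp add: fps_X_power_mult_nth)
next
  assume h: "\<forall>i<n. fps_nth f i = 0"
  have "f = fps_X ^ n * Abs_fps (\<lambda>i. fps_nth f (i + n))"
    by (rule fps_ext) (simp add: fps_X_power_mult_nth h)
  then show "fps_X ^ n dvd f" by (metis dvd_triv_left)
qed

definition lead :: "nat \<Rightarrow> complex fps \<Rightarrow> complex \<Rightarrow> bool" where
  "lead N x y \<longleftrightarrow> fps_X ^ (N + 1) dvd (x - fps_X ^ N * fps_const y)"

lemma lead_iff: "lead N x y \<longleftrightarrow> (\<forall>i<N. fps_nth x i = 0) \<and> fps_nth x N = y"
proof -
  have "(\<forall>i<N+1. fps_nth (x - fps_X ^ N * fps_const y) i = 0) \<longleftrightarrow> (\<forall>i<N. fps_nth x i = 0) \<and> fps_nth x N = y"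
  proof
    assume h: "\<forall>i<N+1. fps_nth (x - fps_X ^ N * fps_const y) i = 0"
    show "(\<forall>i<N. fps_nth x i = 0) \<and> fps_nth x N = y"
    proof (intro conjI allI impI)
      fix i assume "i < N" then show "fps_nth x i = 0" using h[rule_format, of i] by (simp add: fps_X_power_mult_nth)
    next
      show "fps_nth x N = y" using h[rule_format, of N] by (simp add: fps_X_power_mult_nth)
    qed
  next
    assume h: "(\<forall>i<N. fps_nth x i = 0) \<and> fps_nth x N = y"
    show "\<forall>i<N+1. fps_nth (x - fps_X ^ N * fps_const y) i = 0"
    proof (intro allI impI)
      fix i assume "i < N + 1"
      then consider "i < N" | "i = N" by linarith
      then show "fps_nth (x - fps_X ^ N * fps_const y) i = 0"
        by cases (use h in \<open>simp_all add: fps_X_power_mult_nth\<close>)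
    qed
  qed
  then show ?thesis unfolding lead_def Xpow_dvd_iff .
qed

lemma lead_add: "lead N x a \<Longrightarrow> lead N y b \<Longrightarrow> lead N (x + y) (a + b)"
  by (simp add: lead_iff)
lemma lead_diff: "lead N x a \<Longrightarrow> lead N y b \<Longrightarrow> lead N (x - y) (a - b)"
  by (simp add: lead_iff)
lemma lead_neg: "lead N x a \<Longrightarrow> lead N (- x) (- a)"
  by (simp add: lead_iff)
lemma lead_zero: "lead N 0 0" by (simp add: lead_iff)
lemma lead_dvd: "fps_X ^ N dvd x \<Longrightarrow> lead N x (fps_nth x N)"
  by (simp add: lead_iff Xpow_dvd_iff)
lemma lead_zero_dvd: "lead N x 0 \<Longrightarrow> fps_X ^ (N+1) dvd x"
  by (simp add: lead_def)
lemma lead_cmult: "lead N x a \<Longrightarrow> lead N (fps_const c * x) (c * a)"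
  by (simp add: lead_iff)

lemma lead_mult: assumes "lead N x a" "lead M y b" shows "lead (N + M) (x * y) (a * b)"
proof -
  from assms obtain r s where r: "x - fps_X ^ N * fps_const a = fps_X ^ (N+1) * r"
    and s: "y - fps_X ^ M * fps_const b = fps_X ^ (M+1) * s"
    unfolding lead_def by (auto elim!: dvdE)
  have x: "x = fps_X ^ N * (fps_const a + fps_X * r)" using r by (simp add: algebra_simps)
  have y: "y = fps_X ^ M * (fps_const b + fps_X * s)" using s by (simp add: algebra_simps)
  have "x * y - fps_X ^ (N + M) * fps_const (a * b) =
     fps_X ^ (N + M + 1) * (fps_const a * s + r * fps_const b + fps_X * r * s)"
  proof -
    have "x * y = fps_X ^ (N + M) * ((fps_const a + fps_X * r) * (fps_const b + fps_X * s))"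
      unfolding x y by (simp add: power_add mult_ac)
    also have "(fps_const a + fps_X * r) * (fps_const b + fps_X * s) =
       fps_const (a * b) + fps_X * (fps_const a * s + r * fps_const b + fps_X * r * s)"
      by (simp add: algebra_simps)
    finally show ?thesis by (simp add: ring_distribs power_add mult_ac)
  qed
  then show ?thesis unfolding lead_def by simp
qed

lemma lead_mono_shift: "lead N x a \<Longrightarrow> lead (N + k) (fps_X ^ k * x) a"
  by (auto simp: lead_iff fps_X_power_mult_nth)

datatype pexp = PZ | PO | PC rat | PV nat | PA pexp pexp | PM pexp pexp | PN pexp

primrec ev :: "(rat \<Rightarrow> 'r::comm_ring_1) \<Rightarrow> (nat \<Rightarrow> 'r) \<Rightarrow> pexp \<Rightarrow> 'r" where
  "ev sc V PZ = 0"
| "ev sc V PO = 1"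
| "ev sc V (PC q) = sc q"
| "ev sc V (PV n) = V n"
| "ev sc V (PA e1 e2) = ev sc V e1 + ev sc V e2"
| "ev sc V (PM e1 e2) = ev sc V e1 * ev sc V e2"
| "ev sc V (PN e) = - ev sc V e"

primrec pd :: "nat \<Rightarrow> pexp \<Rightarrow> pexp" where
  "pd i PZ = PZ"
| "pd i PO = PZ"
| "pd i (PC q) = PZ"
| "pd i (PV n) = (if n = i then PO else PZ)"
| "pd i (PA e1 e2) = PA (pd i e1) (pd i e2)"
| "pd i (PM e1 e2) = PA (PM (pd i e1) e2) (PM e1 (pd i e2))"
| "pd i (PN e) = PN (pd i e)"

primrec hom :: "nat set \<Rightarrow> (nat \<Rightarrow> nat) \<Rightarrow> nat \<Rightarrow> pexp \<Rightarrow> bool" where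
  "hom A w W PZ = True"
| "hom A w W PO = (W = 0)"
| "hom A w W (PC q) = (W = 0)"
| "hom A w W (PV n) = (n \<in> A \<and> W = w n)"
| "hom A w W (PA e1 e2) = (hom A w W e1 \<and> hom A w W e2)"
| "hom A w W (PM e1 e2) = (\<exists>W1 W2. W = W1 + W2 \<and> hom A w W1 e1 \<and> hom A w W2 e2)"
| "hom A w W (PN e) = hom A w W e"

lemma ev_deriv:
  "((\<lambda>z. ev of_rat (V(i := z)) e) has_field_derivative ev of_rat (V(i := z0)) (pd i e)) (at (z0::complex))"
proof (induction e)
  case (PV n)
  then show ?case by (cases "n = i") (auto intro!: derivative_eq_intros)
next
  case (PM e1 e2)
  then show ?case by (auto intro!: derivative_eq_intros simp: algebra_simps)
qed (auto intro!: derivative_eq_intros)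

lemma ev_deriv_eq: "deriv (\<lambda>z. ev of_rat (V(i := z)) e) z0 = ev of_rat (V(i := (z0::complex))) (pd i e)"
  by (rule DERIV_imp_deriv[OF ev_deriv])

abbreviation fsc' :: "rat \<Rightarrow> complex fps" where "fsc' \<equiv> (\<lambda>q. fps_const (of_rat q))"

lemma ev_lead:
  assumes "\<And>n. n \<in> A \<Longrightarrow> lead (d * w n) (V n) (ct n)"
  shows "hom A w W e \<Longrightarrow> lead (d * W) (ev fsc' V e) (ev of_rat ct e)"
proof (induction e arbitrary: W)
  case PZ then show ?case by (simp add: lead_zero)
next
  case PO then show ?case by (simp add: lead_iff)
next
  case (PC q) then show ?case by (simp add: lead_iff)
next
  case (PV n) then show ?case using assms by simp
next
  case (PA e1 e2) then show ?case by (auto intro: lead_add)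
next
  case (PM e1 e2)
  then obtain W1 W2 where "W = W1 + W2" "hom A w W1 e1" "hom A w W2 e2" by auto
  with PM.IH[of W1] PM.IH[of W2] lead_mult show ?case by (force simp: distrib_left)
next
  case (PN e) then show ?case by (auto intro: lead_neg)
qed

lemma ev_pert:
  assumes L0: "\<And>n. n \<in> A \<Longrightarrow> lead (d * w n) (V0 n) (ct n)"
    and V1: "\<And>n. n \<in> A \<Longrightarrow> V1 n = V0 n + fps_X ^ (d * w n + k) * fps_const (dl n)"
    and S: "finite S" "\<And>n. n \<notin> S \<Longrightarrow> dl n = 0"
    and k: "0 < k"
  shows "hom A w W e \<Longrightarrow> lead (d * W + k) (ev fsc' V1 e - ev fsc' V0 e)
           (\<Sum>n\<in>S. ev of_rat ct (pd n e) * dl n)"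
proof (induction e arbitrary: W)
  case PZ then show ?case by (simp add: lead_zero)
next
  case PO then show ?case by (simp add: lead_zero)
next
  case (PC q) then show ?case by (simp add: lead_zero)
next
  case (PV n)
  have "(\<Sum>m\<in>S. ev of_rat ct (pd m (PV n)) * dl m) = (\<Sum>m\<in>S. if m = n then dl n else 0)"
    by (rule sum.cong) auto
  also have "\<dots> = dl n" using S by (cases "n \<in> S") auto
  finally have s: "(\<Sum>m\<in>S. ev of_rat ct (pd m (PV n)) * dl m) = dl n" .
  have "lead (d * W + k) (fps_X ^ (d * w n + k) * fps_const (dl n)) (dl n)"
    using PV by (simp add: lead_iff fps_X_power_mult_nth)
  then show ?case using PV V1[of n] s by simp
next
  case (PA e1 e2)
  then have "lead (d * W + k) ((ev fsc' V1 e1 - ev fsc' V0 e1) + (ev fsc' V1 e2 - ev fsc' V0 e2))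
      ((\<Sum>n\<in>S. ev of_rat ct (pd n e1) * dl n) + (\<Sum>n\<in>S. ev of_rat ct (pd n e2) * dl n))"
    by (auto intro: lead_add)
  then show ?case by (simp add: sum.distrib distrib_right algebra_simps)
next
  case (PM e1 e2)
  then obtain W1 W2 where W: "W = W1 + W2" and h1: "hom A w W1 e1" and h2: "hom A w W2 e2" by auto
  have L1: "\<And>n. n \<in> A \<Longrightarrow> lead (d * w n) (V1 n) (ct n)"
  proof -
    fix n assume n: "n \<in> A"
    have "lead (d * w n) (fps_X ^ (d * w n + k) * fps_const (dl n)) 0"
      using k by (simp add: lead_iff fps_X_power_mult_nth)
    from lead_add[OF L0[OF n] this] show "lead (d * w n) (V1 n) (ct n)" using V1[OF n] by simp
  qed
  have a1: "lead (d * W1 + k) (ev fsc' V1 e1 - ev fsc' V0 e1) (\<Sum>n\<in>S. ev of_rat ct (pd n e1) * dl n)"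
    using PM.IH(1)[OF h1] .
  have a2: "lead (d * W2 + k) (ev fsc' V1 e2 - ev fsc' V0 e2) (\<Sum>n\<in>S. ev of_rat ct (pd n e2) * dl n)"
    using PM.IH(2)[OF h2] .
  have b1: "lead (d * W2) (ev fsc' V1 e2) (ev of_rat ct e2)" using ev_lead[OF L1 h2] .
  have b0: "lead (d * W1) (ev fsc' V0 e1) (ev of_rat ct e1)" using ev_lead[OF L0 h1] .
  have m1: "lead (d * W + k) ((ev fsc' V1 e1 - ev fsc' V0 e1) * ev fsc' V1 e2)
      ((\<Sum>n\<in>S. ev of_rat ct (pd n e1) * dl n) * ev of_rat ct e2)"
    using lead_mult[OF a1 b1] W by (simp add: distrib_left add_ac)
  have m2: "lead (d * W + k) (ev fsc' V0 e1 * (ev fsc' V1 e2 - ev fsc' V0 e2))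
      (ev of_rat ct e1 * (\<Sum>n\<in>S. ev of_rat ct (pd n e2) * dl n))"
    using lead_mult[OF b0 a2] W by (simp add: distrib_left add_ac)
  have eq1: "(ev fsc' V1 e1 - ev fsc' V0 e1) * ev fsc' V1 e2 + ev fsc' V0 e1 * (ev fsc' V1 e2 - ev fsc' V0 e2)
     = ev fsc' V1 (PM e1 e2) - ev fsc' V0 (PM e1 e2)" by (simp add: algebra_simps)
  have eq2: "(\<Sum>n\<in>S. ev of_rat ct (pd n e1) * dl n) * ev of_rat ct e2 + ev of_rat ct e1 * (\<Sum>n\<in>S. ev of_rat ct (pd n e2) * dl n)
     = (\<Sum>n\<in>S. ev of_rat ct (pd n (PM e1 e2)) * dl n)"
    by (simp add: sum_distrib_left sum_distrib_right sum.distrib[symmetric] algebra_simps)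
  show ?case using lead_add[OF m1 m2] unfolding eq1 eq2 .
next
  case (PN e) then have "lead (d * W + k) (- (ev fsc' V1 e - ev fsc' V0 e)) (- (\<Sum>n\<in>S. ev of_rat ct (pd n e) * dl n))"
    by (intro lead_neg) simp
  then show ?case by (simp add: sum_negf)
qed

definition psum :: "pexp list \<Rightarrow> pexp" where "psum es = foldr PA es PZ"

lemma ev_psum: "ev sc V (psum es) = sum_list (map (ev sc V) es)"
  unfolding psum_def by (induction es) auto

lemma hom_psum: "(\<forall>e\<in>set es. hom A w W e) \<Longrightarrow> hom A w W (psum es)"
  unfolding psum_def by (induction es) auto

lemma hom_PM_intro: "hom A w Wa e1 \<Longrightarrow> hom A w Wb e2 \<Longrightarrow> W = Wa + Wb \<Longrightarrow> hom A w W (PM e1 e2)"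
  by auto

lemma sum_list_upt_sum: "sum_list (map g [m..<n]) = (\<Sum>i\<in>{m..<n}. g i)"
  by (simp add: sum_list_distinct_conv_sum_set)

primrec qp :: "nat \<Rightarrow> (nat \<Rightarrow> nat) \<Rightarrow> nat \<Rightarrow> nat \<Rightarrow> pexp" where
  "qp a f 0 n = (if n = 0 then PO else PZ)"
| "qp a f (Suc m) n = psum (map (\<lambda>i. if 2 \<le> i \<and> i \<le> a then PM (PV (f i)) (qp a f m (n - i)) else PZ) [0..<Suc n])"

lemma Qnth: "fps_nth (\<Sum>k=2..a. fps_const (c k) * fps_X ^ k) i = (if 2 \<le> i \<and> i \<le> a then c i else (0::'r::comm_ring_1))"
proof -
  have "fps_nth (\<Sum>k=2..a. fps_const (c k) * fps_X ^ k) i = (\<Sum>k=2..a. fps_nth (fps_const (c k) * fps_X ^ k) i)"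
    by (simp only: fps_sum_nth)
  also have "\<dots> = (\<Sum>k=2..a. if i = k then c k else 0)"
    by (rule sum.cong) auto
  also have "\<dots> = (if 2 \<le> i \<and> i \<le> a then c i else 0)"
    by (simp add: sum.delta)
  finally show ?thesis .
qed

lemma ev_qp: "ev sc V (qp a f m n) = fps_nth ((\<Sum>k=2..a. fps_const (V (f k)) * fps_X ^ k) ^ m) n"
proof (induction m arbitrary: n)
  case 0 then show ?case by simp
next
  case (Suc m)
  let ?Q = "(\<Sum>k=2..a. fps_const (V (f k)) * fps_X ^ k)"
  have "ev sc V (qp a f (Suc m) n) = (\<Sum>i\<in>{0..<Suc n}. ev sc V (if 2 \<le> i \<and> i \<le> a then PM (PV (f i)) (qp a f m (n - i)) else PZ))"
    by (simp only: qp.simps ev_psum map_map sum_list_upt_sum o_def)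
  also have "\<dots> = (\<Sum>i=0..n. fps_nth ?Q i * fps_nth (?Q ^ m) (n - i))"
    by (rule sum.cong) (auto simp: Qnth[of "\<lambda>k. V (f k)"] Suc.IH)
  also have "\<dots> = fps_nth (?Q ^ Suc m) n" by (simp add: fps_mult_nth)
  finally show ?case .
qed

lemma hom_qp: assumes "\<And>i. 2 \<le> i \<Longrightarrow> i \<le> a \<Longrightarrow> f i \<in> A \<and> w (f i) = i"
  shows "hom A w n (qp a f m n)"
proof (induction m arbitrary: n)
  case 0 then show ?case by simp
next
  case (Suc m)
  show ?case unfolding qp.simps
  proof (rule hom_psum, safe)
    fix e assume "e \<in> set (map (\<lambda>i. if 2 \<le> i \<and> i \<le> a then PM (PV (f i)) (qp a f m (n - i)) else PZ) [0..<Suc n])"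
    then obtain i where "i \<in> set [0..<Suc n]" and e: "e = (if 2 \<le> i \<and> i \<le> a then PM (PV (f i)) (qp a f m (n - i)) else PZ)"
      by (simp only: set_map) blast
    then have i: "i \<le> n" by auto
    show "hom A w n e"
    proof (cases "2 \<le> i \<and> i \<le> a")
      case True
      then have "hom A w n (PM (PV (f i)) (qp a f m (n - i)))" using assms[of i] Suc.IH[of "n - i"] i
        by (intro hom_PM_intro[where Wa=i and Wb="n - i"]) auto
      then show ?thesis unfolding e using True by simp
    next
      case False then show ?thesis unfolding e by (simp only: if_False hom.simps)
    qed
  qed
qed

definition fe :: "nat \<Rightarrow> nat \<Rightarrow> (nat \<Rightarrow> nat) \<Rightarrow> nat \<Rightarrow> pexp" where
  "fe a b f n = psum (map (\<lambda>m. PM (PC ((of_nat b / of_nat a) gchoose m)) (qp a f m n)) [0..<Suc n])"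

lemma ev_fe: "ev sc V (fe a b f n) = fcoef sc a b (\<lambda>k. V (f k)) n"
proof -
  have "ev sc V (fe a b f n) = (\<Sum>m\<in>{0..<Suc n}. sc ((of_nat b / of_nat a) gchoose m) * fps_nth ((\<Sum>k=2..a. fps_const (V (f k)) * fps_X ^ k) ^ m) n)"
    unfolding fe_def by (simp add: ev_psum sum_list_upt_sum ev_qp)
  also have "{0..<Suc n} = {..n}" by auto
  finally show ?thesis unfolding fcoef_def by (simp add: fps_sum_nth)
qed

lemma hom_fe: assumes "\<And>i. 2 \<le> i \<Longrightarrow> i \<le> a \<Longrightarrow> f i \<in> A \<and> w (f i) = i"
  shows "hom A w n (fe a b f n)"
  unfolding fe_def
  by (rule hom_psum) (auto intro!: hom_PM_intro[where Wa=0 and Wb=n] hom_qp assms)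

definition jn :: "(nat \<Rightarrow> 'r) \<Rightarrow> (nat \<Rightarrow> 'r) \<Rightarrow> nat \<Rightarrow> 'r" where
  "jn c C n = (if even n then c (n div 2) else C (n div 2))"

lemma jn_even[simp]: "jn c C (2 * i) = c i" by (simp add: jn_def)
lemma jn_odd[simp]: "jn c C (2 * i + 1) = C i" by (simp add: jn_def)
lemma jn_odd'[simp]: "jn c C (Suc (2 * i)) = C i" by (simp add: jn_def)

definition be :: "nat \<Rightarrow> nat \<Rightarrow> nat \<Rightarrow> pexp" where
  "be a b j = PA (fe a b (\<lambda>i. 2 * i) (b + j))
     (PA (psum (map (\<lambda>k. PM (PM (PC ((of_nat j - of_nat k) / of_nat a)) (PA (PV (2 * k)) (PN (PV (2 * k + 1)))))
                          (fe a b (\<lambda>i. 2 * i + 1) (b + j - k))) [2..<j]))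
         (PN (psum (map (\<lambda>k. PM (PM (PC ((of_nat j - of_nat k) / of_nat a))
                 (psum (map (\<lambda>l. PM (PM (PC ((of_nat a - of_nat l) / of_nat a))
                       (PA (PV (2 * (k - l))) (PN (PV (2 * (k - l) + 1))))) (PV (2 * l + 1))) [2..<k - 1])))
                 (fe a b (\<lambda>i. 2 * i + 1) (b + j - k))) [2..<j]))))"

lemma set_upt_j: "{2..j - 1} = {2..<(j::nat)}" by auto
lemma set_upt_k: "{2..k - 2} = {2..<(k::nat) - 1}" by auto

lemma ev_be: "ev sc (jn c C) (be a b j) = barf sc a b C c j"
proof -
  have f1: "(\<lambda>k. jn c C (2 * k)) = c" by auto
  have f2: "(\<lambda>k. jn c C (2 * k + 1)) = C" by auto
  show ?thesis
    unfolding be_def barf_def set_upt_j set_upt_k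
    apply (simp add: ev_psum map_map o_def sum_list_upt_sum ev_fe f1 f2 del: mult_2 mult_2_right)
    done
qed

lemma hom_be:
  assumes j: "1 \<le> j" "j \<le> a - 1"
  shows "hom {n. n div 2 \<in> {2..a}} (\<lambda>n. n div 2) (b + j) (be a b j)"
proof -
  let ?A = "{n. n div 2 \<in> {2..a}}" and ?w = "\<lambda>n::nat. n div 2"
  have h1: "hom ?A ?w n (fe a b (\<lambda>i. 2 * i) n)" for n by (rule hom_fe) auto
  have h2: "hom ?A ?w n (fe a b (\<lambda>i. 2 * i + 1) n)" for n by (rule hom_fe) auto
  have s1: "hom ?A ?w (b + j) (psum (map (\<lambda>k. PM (PM (PC ((of_nat j - of_nat k) / of_nat a)) (PA (PV (2 * k)) (PN (PV (2 * k + 1)))))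
                          (fe a b (\<lambda>i. 2 * i + 1) (b + j - k))) [2..<j]))"
  proof (rule hom_psum, safe)
    fix e assume "e \<in> set (map (\<lambda>k. PM (PM (PC ((of_nat j - of_nat k) / of_nat a)) (PA (PV (2 * k)) (PN (PV (2 * k + 1)))))
                          (fe a b (\<lambda>i. 2 * i + 1) (b + j - k))) [2..<j])"
    then obtain k where k: "k \<in> set [2..<j]" and e: "e = PM (PM (PC ((of_nat j - of_nat k) / of_nat a)) (PA (PV (2 * k)) (PN (PV (2 * k + 1)))))
                          (fe a b (\<lambda>i. 2 * i + 1) (b + j - k))"
      by (simp only: set_map) blast
    from k j have k2: "2 \<le> k" "k < j" by auto
    show "hom ?A ?w (b + j) e" unfolding e
      by (rule hom_PM_intro[where Wa=k and Wb="b + j - k"])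
         (use k2 j h2 in auto)
  qed
  have s2: "hom ?A ?w (b + j) (psum (map (\<lambda>k. PM (PM (PC ((of_nat j - of_nat k) / of_nat a))
                 (psum (map (\<lambda>l. PM (PM (PC ((of_nat a - of_nat l) / of_nat a))
                       (PA (PV (2 * (k - l))) (PN (PV (2 * (k - l) + 1))))) (PV (2 * l + 1))) [2..<k - 1])))
                 (fe a b (\<lambda>i. 2 * i + 1) (b + j - k))) [2..<j]))"
  proof (rule hom_psum, safe)
    fix e assume "e \<in> set (map (\<lambda>k. PM (PM (PC ((of_nat j - of_nat k) / of_nat a))
                 (psum (map (\<lambda>l. PM (PM (PC ((of_nat a - of_nat l) / of_nat a))
                       (PA (PV (2 * (k - l))) (PN (PV (2 * (k - l) + 1))))) (PV (2 * l + 1))) [2..<k - 1])))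
                 (fe a b (\<lambda>i. 2 * i + 1) (b + j - k))) [2..<j])"
    then obtain k where k: "k \<in> set [2..<j]" and e: "e = PM (PM (PC ((of_nat j - of_nat k) / of_nat a))
                 (psum (map (\<lambda>l. PM (PM (PC ((of_nat a - of_nat l) / of_nat a))
                       (PA (PV (2 * (k - l))) (PN (PV (2 * (k - l) + 1))))) (PV (2 * l + 1))) [2..<k - 1])))
                 (fe a b (\<lambda>i. 2 * i + 1) (b + j - k))"
      by (simp only: set_map) blast
    from k j have k2: "2 \<le> k" "k < j" by auto
    have inner: "hom ?A ?w k (psum (map (\<lambda>l. PM (PM (PC ((of_nat a - of_nat l) / of_nat a))
                       (PA (PV (2 * (k - l))) (PN (PV (2 * (k - l) + 1))))) (PV (2 * l + 1))) [2..<k - 1]))"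
    proof (rule hom_psum, safe)
      fix e' assume "e' \<in> set (map (\<lambda>l. PM (PM (PC ((of_nat a - of_nat l) / of_nat a))
                       (PA (PV (2 * (k - l))) (PN (PV (2 * (k - l) + 1))))) (PV (2 * l + 1))) [2..<k - 1])"
      then obtain l where l: "l \<in> set [2..<k - 1]" and e': "e' = PM (PM (PC ((of_nat a - of_nat l) / of_nat a))
                       (PA (PV (2 * (k - l))) (PN (PV (2 * (k - l) + 1))))) (PV (2 * l + 1))"
        by (simp only: set_map) blast
      from l have l2: "2 \<le> l" "l + 2 \<le> k" by auto
      show "hom ?A ?w k e'" unfolding e'
        by (rule hom_PM_intro[where Wa="k - l" and Wb=l]) (use l2 k2 j in auto)
    qed
    show "hom ?A ?w (b + j) e" unfolding e
      by (rule hom_PM_intro[where Wa=k and Wb="b + j - k"]) (use k2 j h2 inner in auto)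
  qed
  show ?thesis unfolding be_def
    using h1 s1 s2 by simp
qed

definition cl :: "nat \<Rightarrow> nat \<Rightarrow> complex fps \<Rightarrow> complex fps \<Rightarrow> bool" where
  "cl k A x0 x1 \<longleftrightarrow> fps_X ^ A dvd x0 \<and> fps_X ^ A dvd x1 \<and> fps_X ^ (A + k) dvd (x1 - x0)"

lemma cl_mult: assumes "cl k A x0 x1" "cl k B y0 y1" shows "cl k (A + B) (x0 * y0) (x1 * y1)"
proof -
  have e: "x1 * y1 - x0 * y0 = (x1 - x0) * y1 + x0 * (y1 - y0)" by (simp add: algebra_simps)
  have "fps_X ^ (A + k + B) dvd (x1 - x0) * y1" using assms unfolding cl_def
    by (simp add: power_add mult_dvd_mono)
  moreover have "fps_X ^ (A + (B + k)) dvd x0 * (y1 - y0)" using assms unfolding cl_def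
    by (simp only: power_add) (simp add: mult_dvd_mono)
  ultimately have "fps_X ^ (A + B + k) dvd x1 * y1 - x0 * y0" unfolding e
    by (simp add: add_ac dvd_add)
  then show ?thesis using assms unfolding cl_def by (simp add: power_add mult_dvd_mono)
qed

definition cl2 :: "nat \<Rightarrow> nat \<Rightarrow> complex fps \<Rightarrow> complex fps \<Rightarrow> bool" where
  "cl2 A B x0 x1 \<longleftrightarrow> fps_X ^ A dvd x0 \<and> fps_X ^ A dvd x1 \<and> fps_X ^ B dvd (x1 - x0)"

lemma cl2_mult: assumes "cl2 A B x0 x1" "cl2 A' B' y0 y1"
  shows "cl2 (A + A') (min (B + A') (A + B')) (x0 * y0) (x1 * y1)"
proof -
  have e: "x1 * y1 - x0 * y0 = (x1 - x0) * y1 + x0 * (y1 - y0)" by (simp add: algebra_simps)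
  have "fps_X ^ (B + A') dvd (x1 - x0) * y1" using assms unfolding cl2_def
    by (simp add: power_add mult_dvd_mono)
  then have 1: "fps_X ^ (min (B + A') (A + B')) dvd (x1 - x0) * y1"
    by (meson dvd_trans le_imp_power_dvd min.cobounded1)
  have "fps_X ^ (A + B') dvd x0 * (y1 - y0)" using assms unfolding cl2_def
    by (simp add: power_add mult_dvd_mono)
  then have 2: "fps_X ^ (min (B + A') (A + B')) dvd x0 * (y1 - y0)"
    by (meson dvd_trans le_imp_power_dvd min.cobounded2)
  from 1 2 have "fps_X ^ (min (B + A') (A + B')) dvd x1 * y1 - x0 * y0" unfolding e
    by (simp add: dvd_add)
  then show ?thesis using assms unfolding cl2_def by (simp add: power_add mult_dvd_mono)
qed

lemma cl_cl2: "cl k A x0 x1 \<Longrightarrow> cl2 A (A + k) x0 x1" by (simp add: cl_def cl2_def)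

lemma cl2_imp: "cl2 A B x0 x1 \<Longrightarrow> M \<le> B \<Longrightarrow> fps_X ^ M dvd (x1 - x0)"
  unfolding cl2_def by (meson dvd_trans le_imp_power_dvd)

lemma cl2_const: "cl2 A B x0 x1 \<Longrightarrow> cl2 A B (fps_const \<alpha> * x0) (fps_const \<alpha> * x1)"
  unfolding cl2_def by (simp add: right_diff_distrib[symmetric])

lemma cl_one: "cl k 0 1 1" by (simp add: cl_def)

lemma cl_power: "cl k A x0 x1 \<Longrightarrow> cl k (l * A) (x0 ^ l) (x1 ^ l)"
proof (induction l)
  case 0 then show ?case by (simp add: cl_one)
next
  case (Suc l) then show ?case using cl_mult[of k A x0 x1 "l * A" "x0 ^ l" "x1 ^ l"] by (simp add: add_ac)
qed

lemma cl_prod: "finite P \<Longrightarrow> (\<forall>p\<in>P. cl k (A p) (x0 p) (x1 p)) \<Longrightarrow> cl k (\<Sum>p\<in>P. A p) (\<Prod>p\<in>P. x0 p) (\<Prod>p\<in>P. x1 p)"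
proof (induction P rule: finite_induct)
  case empty then show ?case by (simp add: cl_one)
next
  case (insert p P) then show ?case using cl_mult[of k "A p" "x0 p" "x1 p"] by simp
qed

lemma cl_const: "cl k A x0 x1 \<Longrightarrow> cl k A (fps_const \<alpha> * x0) (fps_const \<alpha> * x1)"
  unfolding cl_def by (simp add: right_diff_distrib[symmetric])

lemma cl_imp: "cl k A x0 x1 \<Longrightarrow> M \<le> A + k \<Longrightarrow> fps_X ^ M dvd (x1 - x0)"
  unfolding cl_def by (meson dvd_trans le_imp_power_dvd)

lemma tadic_diff: "tadic_sum f - tadic_sum g = tadic_sum (\<lambda>m. f m - g m)"
  unfolding tadic_sum_def by (rule fps_ext) (simp add: sum_subtractf)

lemma tadic_dvd: assumes "\<And>m. fps_X ^ (N - m) dvd h m" shows "fps_X ^ N dvd tadic_sum h"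
proof -
  have "fps_nth (tadic_sum h) i = 0" if i: "i < N" for i
  proof -
    have "fps_nth (tadic_sum h) i = (\<Sum>m\<le>i. fps_nth (h m) (i - m))" unfolding tadic_sum_def by simp
    also have "\<dots> = 0"
    proof (intro sum.neutral ballI)
      fix m assume "m \<in> {..i}"
      then have "i - m < N - m" using i by auto
      then show "fps_nth (h m) (i - m) = 0" using assms[of m] unfolding Xpow_dvd_iff by blast
    qed
    finally show ?thesis .
  qed
  then show ?thesis unfolding Xpow_dvd_iff by blast
qed

lemma oval_pert:
  assumes adm: "o_admissible a b d al1 al2"
    and c0: "\<And>p. p \<in> {2..a} \<Longrightarrow> fps_X ^ (d * p) dvd c0 p"
    and c1: "\<And>p. p \<in> {2..a} \<Longrightarrow> fps_X ^ (d * p) dvd c1 p"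
    and c01: "\<And>p. p \<in> {2..a} \<Longrightarrow> fps_X ^ (d * p + k) dvd (c1 p - c0 p)"
    and C0: "\<And>p. p \<in> {2..a} \<Longrightarrow> fps_X ^ (d * p + 1) dvd (c0 p - C p)"
    and C1: "\<And>p. p \<in> {2..a} \<Longrightarrow> fps_X ^ (d * p + 1) dvd (c1 p - C p)"
  shows "fps_X ^ (d * (b + j) + k + 1) dvd (oval a C al1 al2 j c1 - oval a C al1 al2 j c0)"
proof -
  let ?N = "d * (b + j) + k + 1"
  have fin1: "finite {l. al1 j m l \<noteq> 0}" for m using adm unfolding o_admissible_def by blast
  have fin2: "finite {(l, k, k'). al2 j m l k k' \<noteq> 0}" for m using adm unfolding o_admissible_def by blast
  have clp: "cl k (d * (\<Sum>p=2..a. p * l p)) (\<Prod>p=2..a. c0 p ^ l p) (\<Prod>p=2..a. c1 p ^ l p)" for l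
  proof -
    have "cl k (\<Sum>p=2..a. l p * (d * p)) (\<Prod>p=2..a. c0 p ^ l p) (\<Prod>p=2..a. c1 p ^ l p)"
    proof (rule cl_prod)
      show "\<forall>p\<in>{2..a}. cl k (l p * (d * p)) (c0 p ^ l p) (c1 p ^ l p)"
      proof
        fix p assume p: "p \<in> {2..a}"
        have "cl k (d * p) (c0 p) (c1 p)" using c0[OF p] c1[OF p] c01[OF p] unfolding cl_def by simp
        then show "cl k (l p * (d * p)) (c0 p ^ l p) (c1 p ^ l p)" by (rule cl_power)
      qed
    qed simp
    moreover have "(\<Sum>p=2..a. l p * (d * p)) = d * (\<Sum>p=2..a. p * l p)"
      by (simp add: sum_distrib_left mult_ac)
    ultimately show ?thesis by simp
  qed
  have clC: "cl2 (d * q + 1) (d * q + k) (c0 q - C q) (c1 q - C q)" if "q \<in> {2..a}" for q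
    using that C0 C1 c01[of q] unfolding cl2_def by (auto simp: add_ac)
  have "fps_X ^ (?N - m) dvd
    ((\<Sum>l\<in>{l. al1 j m l \<noteq> 0}. fps_const (al1 j m l) * (\<Prod>p=2..a. c1 p ^ l p))
    + (\<Sum>(l, k1, k')\<in>{(l, k, k'). al2 j m l k k' \<noteq> 0}.
          fps_const (al2 j m l k1 k') * (\<Prod>p=2..a. c1 p ^ l p) * (c1 k1 - C k1) * (c1 k' - C k')))
    - ((\<Sum>l\<in>{l. al1 j m l \<noteq> 0}. fps_const (al1 j m l) * (\<Prod>p=2..a. c0 p ^ l p))
    + (\<Sum>(l, k1, k')\<in>{(l, k, k'). al2 j m l k k' \<noteq> 0}.
          fps_const (al2 j m l k1 k') * (\<Prod>p=2..a. c0 p ^ l p) * (c0 k1 - C k1) * (c0 k' - C k')))" for m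
  proof -
    have d1: "fps_X ^ (?N - m) dvd (\<Sum>l\<in>{l. al1 j m l \<noteq> 0}. fps_const (al1 j m l) * (\<Prod>p=2..a. c1 p ^ l p) - fps_const (al1 j m l) * (\<Prod>p=2..a. c0 p ^ l p))"
    proof (rule dvd_sum)
      fix l assume "l \<in> {l. al1 j m l \<noteq> 0}"
      then have "m + d * (\<Sum>p=2..a. p * l p) \<ge> d * (b + j) + 1" using adm unfolding o_admissible_def by blast
      then show "fps_X ^ (?N - m) dvd fps_const (al1 j m l) * (\<Prod>p=2..a. c1 p ^ l p) - fps_const (al1 j m l) * (\<Prod>p=2..a. c0 p ^ l p)"
        by (intro cl_imp[OF cl_const[OF clp]]) linarith
    qed
    have d2: "fps_X ^ (?N - m) dvd (\<Sum>(l, k1, k')\<in>{(l, k, k'). al2 j m l k k' \<noteq> 0}.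
          fps_const (al2 j m l k1 k') * (\<Prod>p=2..a. c1 p ^ l p) * (c1 k1 - C k1) * (c1 k' - C k')
        - fps_const (al2 j m l k1 k') * (\<Prod>p=2..a. c0 p ^ l p) * (c0 k1 - C k1) * (c0 k' - C k'))"
    proof (rule dvd_sum, clarify)
      fix l k1 k' assume "al2 j m l k1 k' \<noteq> 0"
      then have h: "k1 \<in> {2..a}" "k' \<in> {2..a}"
        "int m + int d * (\<Sum>p=2..a. int p * int (l p)) \<ge> int d * int (b + j) - int d * int (k1 + k')"
        using adm unfolding o_admissible_def by blast+
      have eq: "(\<Sum>p=2..a. int p * int (l p)) = int (\<Sum>p=2..a. p * l p)" by simp
      have h3: "int m + int (d * (\<Sum>p=2..a. p * l p)) \<ge> int (d * (b + j)) - int (d * k1) - int (d * k')"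
        using h(3) unfolding eq of_nat_mult of_nat_add distrib_left by linarith
      let ?S = "d * (\<Sum>p=2..a. p * l p)"
      have "cl2 (?S + (d * k1 + 1) + (d * k' + 1))
          (min (min (?S + k + (d * k1 + 1)) (?S + (d * k1 + k)) + (d * k' + 1))
               (?S + (d * k1 + 1) + (d * k' + k)))
          (fps_const (al2 j m l k1 k') * (\<Prod>p=2..a. c0 p ^ l p) * (c0 k1 - C k1) * (c0 k' - C k'))
          (fps_const (al2 j m l k1 k') * (\<Prod>p=2..a. c1 p ^ l p) * (c1 k1 - C k1) * (c1 k' - C k'))"
        using cl2_const[OF cl2_mult[OF cl2_mult[OF cl_cl2[OF clp] clC[OF h(1)]] clC[OF h(2)]], where \<alpha>="al2 j m l k1 k'"]
        by (simp only: mult.assoc)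
      then show "fps_X ^ (?N - m) dvd
          fps_const (al2 j m l k1 k') * (\<Prod>p=2..a. c1 p ^ l p) * (c1 k1 - C k1) * (c1 k' - C k')
        - fps_const (al2 j m l k1 k') * (\<Prod>p=2..a. c0 p ^ l p) * (c0 k1 - C k1) * (c0 k' - C k')"
        by (rule cl2_imp) (use h3 in linarith)
    qed
    have e: "\<And>a1 b1 a0 b0 :: complex fps. (a1 + b1) - (a0 + b0) = (a1 - a0) + (b1 - b0)" by simp
    from dvd_add[OF d1 d2] show ?thesis
      unfolding e split_def sum_subtractf .
  qed
  then show ?thesis unfolding oval_def tadic_diff by (intro tadic_dvd)
qed

lemma solve_lin:
  fixes A :: "complex mat"
  assumes A: "A \<in> carrier_mat n n" and d: "det A \<noteq> 0" and y: "y \<in> carrier_vec n"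
  shows "\<exists>x \<in> carrier_vec n. A *\<^sub>v x = y"
proof -
  have "A \<in> Units (ring_mat TYPE(complex) n undefined)" by (rule det_non_zero_imp_unit[OF A d])
  then obtain B where B: "B \<in> carrier_mat n n" and AB: "A * B = 1\<^sub>m n"
    unfolding Units_def by (auto simp: ring_mat_simps)
  have "A *\<^sub>v (B *\<^sub>v y) = (A * B) *\<^sub>v y" using A B y by simp
  also have "\<dots> = y" using AB y by simp
  finally show ?thesis using B y by (intro bexI[of _ "B *\<^sub>v y"]) auto
qed

lemma lead_dvdX: "lead N x y \<Longrightarrow> fps_X ^ N dvd x"
  by (simp add: lead_iff Xpow_dvd_iff)
lemma dvd_lead0: "fps_X ^ (N + 1) dvd x \<Longrightarrow> lead N x 0"
  by (simp add: lead_def)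

lemma jn_upd: "jn (ct(i := z)) C = (jn ct C)(2 * i := z)"
  by (auto simp: jn_def fun_eq_iff elim!: evenE)

lemma barf_deriv_ev:
  fixes ct :: "nat \<Rightarrow> complex"
  shows "deriv (\<lambda>z. barf of_rat a b ct (ct(i := z)) j) (ct i) = ev of_rat (jn ct ct) (pd (2 * i) (be a b j))"
proof -
  have eq: "(\<lambda>z. barf of_rat a b ct (ct(i := z)) j) = (\<lambda>z. ev of_rat ((jn ct ct)(2 * i := z)) (be a b j))"
    by (simp add: ev_be[symmetric] jn_upd)
  have "deriv (\<lambda>z. barf of_rat a b ct (ct(i := z)) j) (ct i) = ev of_rat ((jn ct ct)(2 * i := ct i)) (pd (2 * i) (be a b j))"
    unfolding eq by (rule ev_deriv_eq)
  also have "(jn ct ct)(2 * i := ct i) = jn ct ct" by (simp add: fun_eq_iff)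
  finally show ?thesis .
qed

lemma fcoef_a2:
  assumes "odd b"
  shows "fcoef sc 2 b c (b + 1) = sc ((of_nat b / of_nat 2) gchoose ((b + 1) div 2)) * c 2 ^ ((b + 1) div 2)"
proof -
  let ?m = "(b + 1) div 2"
  have "fcoef sc 2 b c (b + 1) = (\<Sum>n\<le>b + 1. fps_nth (fps_const (sc ((of_nat b / of_nat 2) gchoose n)) * (fps_const (c 2 ^ n) * fps_X ^ (2 * n))) (b + 1))"
  proof -
    have pw: "\<And>n. (fps_const (c 2) * fps_X ^ 2) ^ n = fps_const (c 2 ^ n) * fps_X ^ (2 * n)"
      by (simp add: power_mult_distrib fps_const_power power_mult)
    have s2: "(\<Sum>k=2..2. fps_const (c k) * fps_X ^ k) = fps_const (c 2) * fps_X ^ 2" by simp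
    show ?thesis unfolding fcoef_def
      by (simp only: s2 pw fps_sum_nth)
  qed
  also have "\<dots> = (\<Sum>n\<le>b + 1. if n = ?m then sc ((of_nat b / of_nat 2) gchoose n) * c 2 ^ n else 0)"
  proof (rule sum.cong)
    fix n assume "n \<in> {..b + 1}"
    have "(b + 1 = 2 * n) \<longleftrightarrow> n = ?m" using assms by (auto elim!: oddE)
    then show "fps_nth (fps_const (sc ((of_nat b / of_nat 2) gchoose n)) * (fps_const (c 2 ^ n) * fps_X ^ (2 * n))) (b + 1)
       = (if n = ?m then sc ((of_nat b / of_nat 2) gchoose n) * c 2 ^ n else 0)"
    proof (cases "n = ?m")
      case True
      with \<open>(b + 1 = 2 * n) \<longleftrightarrow> n = ?m\<close> have "b + 1 = 2 * n" by blast
      then show ?thesis using True by (simp add: fps_X_power_mult_right_nth mult.assoc[symmetric])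
    next
      case False
      with \<open>(b + 1 = 2 * n) \<longleftrightarrow> n = ?m\<close> have "b + 1 \<noteq> 2 * n" by blast
      then show ?thesis using False by (simp add: fps_X_power_mult_right_nth mult.assoc[symmetric])
    qed
  qed simp
  also have "\<dots> = sc ((of_nat b / of_nat 2) gchoose ?m) * c 2 ^ ?m"
    by (simp add: sum.delta')
  finally show ?thesis .
qed

lemma a2_entry:
  assumes "odd b" "ct 2 \<noteq> 0"
  shows "deriv (\<lambda>z. barf of_rat 2 b ct (ct(2 := z)) 1) (ct 2) \<noteq> (0::complex)"
proof -
  let ?m = "(b + 1) div 2" and ?g = "(of_nat b / of_nat 2 :: rat) gchoose ((b + 1) div 2)"
  have m: "?m \<ge> 1" using assms by (auto elim!: oddE)
  have "(\<lambda>z. barf of_rat 2 b ct (ct(2 := z)) 1) = (\<lambda>z. of_rat ?g * z ^ ?m)"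
    unfolding barf_def fcoef_a2[OF assms(1)] by simp
  moreover have "((\<lambda>z. of_rat ?g * z ^ ?m) has_field_derivative of_rat ?g * (of_nat ?m * ct 2 ^ (?m - 1))) (at (ct 2))"
    by (auto intro!: derivative_eq_intros)
  ultimately have D: "deriv (\<lambda>z. barf of_rat 2 b ct (ct(2 := z)) 1) (ct 2) = of_rat ?g * (of_nat ?m * ct 2 ^ (?m - 1))"
    by (simp add: DERIV_imp_deriv)
  have "fact ?m * ?g = (\<Prod>i = 0..<?m. of_nat b / of_nat 2 - of_nat i)" by (rule gbinomial_mult_fact)
  also have "\<dots> \<noteq> 0"
  proof -
    have "of_nat b / of_nat 2 - of_nat i \<noteq> (0::rat)" for i
    proof
      assume "of_nat b / of_nat 2 - of_nat i = (0::rat)"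
      then have "of_nat b = (of_nat (2 * i) :: rat)" by (simp add: field_simps)
      then have "b = 2 * i" by (simp only: of_nat_eq_iff)
      with assms(1) show False by simp
    qed
    then show ?thesis by (simp add: prod_zero_iff)
  qed
  finally have "?g \<noteq> 0" by auto
  then show ?thesis unfolding D using assms(2) m by simp
qed

lemma sum_jn:
  assumes "\<And>i. i \<notin> {2..a} \<Longrightarrow> dl i = 0"
  shows "(\<Sum>n\<in>{..2 * a + 1}. g n * jn dl (\<lambda>_. 0) n) = (\<Sum>i\<in>{2..a}. g (2 * i) * dl i :: complex)"
proof -
  have "(\<Sum>i\<in>{2..a}. g (2 * i) * dl i) = (\<Sum>n\<in>(\<lambda>i. 2 * i) ` {2..a}. g n * jn dl (\<lambda>_. 0) n)"
    by (subst sum.reindex) (auto simp: inj_on_def)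
  also have "\<dots> = (\<Sum>n\<in>{..2 * a + 1}. g n * jn dl (\<lambda>_. 0) n)"
  proof (rule sum.mono_neutral_left)
    show "\<forall>n\<in>{..2 * a + 1} - (\<lambda>i. 2 * i) ` {2..a}. g n * jn dl (\<lambda>_. 0) n = 0"
    proof
      fix n assume n: "n \<in> {..2 * a + 1} - (\<lambda>i. 2 * i) ` {2..a}"
      show "g n * jn dl (\<lambda>_. 0) n = 0"
      proof (cases "even n")
        case True
        then obtain i where i: "n = 2 * i" by (auto elim: evenE)
        with n have "i \<notin> {2..a}" by auto
        then show ?thesis using assms i by simp
      next
        case False then show ?thesis by (simp add: jn_def)
      qed
    qed
  qed auto
  finally show ?thesis by simp
qed

lemma sum_shift2: "2 \<le> (a::nat) \<Longrightarrow> (\<Sum>i\<in>{2..a}. h i) = (\<Sum>s\<in>{0..<a - 1}. h (s + 2))"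
proof -
  have e: "\<And>aa::nat. 2 \<le> aa \<Longrightarrow> Suc (Suc (aa - 2)) = aa" by arith
  assume "2 \<le> a" then show ?thesis
    by (intro sum.reindex_bij_witness[of _ "\<lambda>s. s + 2" "\<lambda>i. i - 2"]) (auto simp: e)
qed

theorem mainTheorem11:
  fixes a b d k :: nat
    and ct :: "nat \<Rightarrow> complex"
    and C c0 :: "nat \<Rightarrow> complex fps"
    and al1 :: "nat \<Rightarrow> nat \<Rightarrow> (nat \<Rightarrow> nat) \<Rightarrow> complex"
    and al2 :: "nat \<Rightarrow> nat \<Rightarrow> (nat \<Rightarrow> nat) \<Rightarrow> nat \<Rightarrow> nat \<Rightarrow> complex"
  assumes "2 \<le> a" and "a < b" and "\<not> a dvd b" and "0 < d" and "0 < k"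
    and "condT a b ct"
    and "\<forall>i\<in>{2..a}. fps_X ^ (d * i + 1) dvd C i - fps_X ^ (d * i) * fps_const (ct i)"
    and "o_admissible a b d al1 al2"
    and "solves a b d ct C al1 al2 k c0"
    and "\<forall>i\<in>{2..a}. fps_X ^ (d * i + 1) dvd c0 i - fps_X ^ (d * i) * fps_const (ct i)"
  shows "\<exists>c1 :: nat \<Rightarrow> complex fps. solves a b d ct C al1 al2 (k + 1) c1 \<and>
           (\<forall>i\<in>{2..a}. fps_X ^ (d * i + k) dvd c1 i - c0 i)"
proof -
  note a2 = assms(1) and kpos = assms(5)
  have LC0: "lead (d * i) (c0 i) (ct i)" if "i \<in> {2..a}" for i
    using assms(10) that unfolding lead_def by blast
  have LCC: "lead (d * i) (C i) (ct i)" if "i \<in> {2..a}" for i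
    using assms(7) that unfolding lead_def by blast
  define Jm where "Jm = mat (a - 1) (a - 1) (\<lambda>(r, s). deriv (\<lambda>z. barf of_rat a b ct (ct(s + 2 := z)) (r + 1)) (ct (s + 2)))"
  have Jc: "Jm \<in> carrier_mat (a - 1) (a - 1)" by (simp add: Jm_def)
  have detJ: "det Jm \<noteq> 0"
  proof (cases "a = 2")
    case True
    have "det Jm = Jm $$ (0, 0)" by (rule det_single) (use Jc True in simp)
    also have "\<dots> = deriv (\<lambda>z. barf of_rat 2 b ct (ct(2 := z)) 1) (ct 2)"
      by (simp add: Jm_def True numeral_2_eq_2)
    also have "\<dots> \<noteq> 0"
    proof (rule a2_entry)
      show "odd b" using assms(3) True by simp
      show "ct 2 \<noteq> 0" using assms(6) True unfolding condT_def by simp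
    qed
    finally show ?thesis .
  next
    case False then show ?thesis using assms(6) unfolding condT_def Jm_def by simp
  qed
  define F where "F c j = barf fsc a b C c j - (fps_X ^ (d * (b + j)) * fps_const (fcoef of_rat a b ct (b + j)) + oval a C al1 al2 j c)"
    for c j
  define e where "e j = fps_nth (F c0 j) (d * (b + j) + k)" for j
  define y where "y = vec (a - 1) (\<lambda>r. - e (r + 1))"
  obtain x where x: "x \<in> carrier_vec (a - 1)" "Jm *\<^sub>v x = y"
    using solve_lin[OF Jc detJ, of y] unfolding y_def by auto
  define dl where "dl i = (if i \<in> {2..a} then vec_index x (i - 2) else 0)" for i
  define c1 where "c1 i = c0 i + fps_X ^ (d * i + k) * fps_const (dl i)" for i
  have close: "\<forall>i\<in>{2..a}. fps_X ^ (d * i + k) dvd c1 i - c0 i" by (simp add: c1_def)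
  have LC1: "lead (d * i) (c1 i) (ct i)" if "i \<in> {2..a}" for i
  proof -
    have "lead (d * i) (fps_X ^ (d * i + k) * fps_const (dl i)) 0"
      using kpos by (simp add: lead_iff fps_X_power_mult_nth)
    from lead_add[OF LC0[OF that] this] show ?thesis by (simp add: c1_def)
  qed
  have sol: "solves a b d ct C al1 al2 (k + 1) c1"
    unfolding solves_def
  proof
    fix j assume j: "j \<in> {1..a - 1}"
    let ?N = "d * (b + j) + k"
    have dl0: "dl i = 0" if "i \<notin> {2..a}" for i unfolding dl_def using that by (rule if_not_P)
    have B: "lead ?N (barf fsc a b C c1 j - barf fsc a b C c0 j)
       (\<Sum>i\<in>{2..a}. deriv (\<lambda>z. barf of_rat a b ct (ct(i := z)) j) (ct i) * dl i)"
    proof -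
      have "lead (d * (b + j) + k) (ev fsc' (jn c1 C) (be a b j) - ev fsc' (jn c0 C) (be a b j))
          (\<Sum>n\<in>{..2 * a + 1}. ev of_rat (jn ct ct) (pd n (be a b j)) * jn dl (\<lambda>_. 0) n)"
      proof (rule ev_pert[where A="{n. n div 2 \<in> {2..a}}" and w="\<lambda>n. n div 2"])
        fix n assume n: "n \<in> {n. n div 2 \<in> {2..a}}"
        show "lead (d * (n div 2)) (jn c0 C n) (jn ct ct n)"
          using LC0[of "n div 2"] LCC[of "n div 2"] n by (simp add: jn_def)
        show "jn c1 C n = jn c0 C n + fps_X ^ (d * (n div 2) + k) * fps_const (jn dl (\<lambda>_. 0) n)"
          by (simp add: jn_def c1_def)
      next
        fix n assume "n \<notin> {..2 * a + 1}"
        then have "n div 2 \<notin> {2..a}" by auto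
        then show "jn dl (\<lambda>_. 0) n = 0" by (simp add: jn_def dl0)
      next
        show "hom {n. n div 2 \<in> {2..a}} (\<lambda>n. n div 2) (b + j) (be a b j)"
          by (rule hom_be) (use j in auto)
      qed (use kpos in auto)
      moreover have "(\<Sum>n\<in>{..2 * a + 1}. ev of_rat (jn ct ct) (pd n (be a b j)) * jn dl (\<lambda>_. 0) n)
         = (\<Sum>i\<in>{2..a}. deriv (\<lambda>z. barf of_rat a b ct (ct(i := z)) j) (ct i) * dl i)"
        unfolding barf_deriv_ev by (rule sum_jn[OF dl0])
      ultimately show ?thesis unfolding ev_be by simp
    qed
    have O: "fps_X ^ (d * (b + j) + k + 1) dvd (oval a C al1 al2 j c1 - oval a C al1 al2 j c0)"
    proof (rule oval_pert[OF assms(8)])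
      fix p assume p: "p \<in> {2..a}"
      show "fps_X ^ (d * p) dvd c0 p" by (rule lead_dvdX[OF LC0[OF p]])
      show "fps_X ^ (d * p) dvd c1 p" by (rule lead_dvdX[OF LC1[OF p]])
      show "fps_X ^ (d * p + k) dvd c1 p - c0 p" using close p by blast
      show "fps_X ^ (d * p + 1) dvd c0 p - C p"
        using lead_diff[OF LC0[OF p] LCC[OF p]] by (simp add: lead_def)
      show "fps_X ^ (d * p + 1) dvd c1 p - C p"
        using lead_diff[OF LC1[OF p] LCC[OF p]] by (simp add: lead_def)
    qed
    have O': "lead ?N (oval a C al1 al2 j c1 - oval a C al1 al2 j c0) 0"
      by (rule dvd_lead0) (use O in simp)
    have F0: "lead ?N (F c0 j) (e j)"
      unfolding e_def by (rule lead_dvd) (use assms(9) j in \<open>simp add: solves_def F_def\<close>)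
    have Feq: "F c1 j = F c0 j + (barf fsc a b C c1 j - barf fsc a b C c0 j)
        - (oval a C al1 al2 j c1 - oval a C al1 al2 j c0)"
      by (simp add: F_def algebra_simps)
    have L: "(\<Sum>i\<in>{2..a}. deriv (\<lambda>z. barf of_rat a b ct (ct(i := z)) j) (ct i) * dl i) = - e j"
    proof -
      have j1: "j - 1 < a - 1" "j - 1 + 1 = j" using j by auto
      have "(\<Sum>i\<in>{2..a}. deriv (\<lambda>z. barf of_rat a b ct (ct(i := z)) j) (ct i) * dl i)
          = (\<Sum>s\<in>{0..<a - 1}. Jm $$ (j - 1, s) * vec_index x s)"
        unfolding sum_shift2[OF a2] by (rule sum.cong) (use j1 in \<open>auto simp: Jm_def dl_def\<close>)
      also have "\<dots> = vec_index (Jm *\<^sub>v x) (j - 1)"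
        using Jc x(1) j1 by (simp add: scalar_prod_def)
      also have "\<dots> = - e j" using x(2) j1 by (simp add: y_def)
      finally show ?thesis .
    qed
    have "lead ?N (F c1 j) (e j + (- e j) - 0)"
      unfolding Feq by (intro lead_diff lead_add F0 O') (use B L in simp)
    then have "fps_X ^ (?N + 1) dvd F c1 j" by (intro lead_zero_dvd) simp
    then show "fps_X ^ (d * (b + j) + (k + 1)) dvd
        barf fsc a b C c1 j - (fps_X ^ (d * (b + j)) * fps_const (fcoef of_rat a b ct (b + j)) + oval a C al1 al2 j c1)"
      by (simp add: F_def add_ac)
  qed
  show ?thesis using sol close by blast
qed

end
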